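(* The class $\mathbb{RBA}$ of all residuated basic algebras has the finite embeddability property: for every residuated basic algebra $\mathbf{A}$ and every finite subset $B$ of its universe, the partial subalgebra of $\mathbf{A}$ on $B$ embeds into some finite residuated basic algebra.
   Context: A residuated basic algebra (RBA) is an algebra $(\mathsf{A},\wedge,\vee,\top,\bot,\rightarrow,\leftarrow,\cdot)$ such that $(\mathsf{A},\wedge,\vee,\top,\bot)$ is a bounded distributive lattice with order $\le$ and for all $a,b,c$: $a\cdot b\le c$ iff $b\le a\rightarrow c$ iff $a\le c\leftarrow b$; $a\cdot\top\le a$; $\top\cdot a\le a$; $a\cdot b\le(a\cdot b)\cdot b$. The partial subalgebra on a finite $B\subseteq\mathsf{A}$ is $B$ with each operation of $\mathbf{A}$ restricted to those arguments in $B$ whose value lies in $B$ (constants included when they lie in $B$). An embedding of it into an algebra $\mathbf{C}$ is an injective map $h:B\to\mathbf{C}$ such that $h(f(b_1,\dots,b_k))=f^{\mathbf{C}}(h(b_1),\dots,h(b_k))$ whenever $f(b_1,\dots,b_k)$ is defined in the partial subalgebra. *)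

theory Defs
  imports Main
begin

text \<open>An algebra of signature (meet, join, top, bot, right residual, left residual, product),
  represented by a carrier set together with the operations.
  rarr a c is  a \<rightarrow> c  and  larr c b  is  c \<leftarrow> b.\<close>

record 'a rb_alg =
  carrier :: "'a set"
  meet :: "'a \<Rightarrow> 'a \<Rightarrow> 'a"
  join :: "'a \<Rightarrow> 'a \<Rightarrow> 'a"
  topel :: "'a"
  botel :: "'a"
  rarr :: "'a \<Rightarrow> 'a \<Rightarrow> 'a"
  larr :: "'a \<Rightarrow> 'a \<Rightarrow> 'a"
  mult :: "'a \<Rightarrow> 'a \<Rightarrow> 'a"

definition le :: "('a, 'b) rb_alg_scheme \<Rightarrow> 'a \<Rightarrow> 'a \<Rightarrow> bool" where
  "le A a b \<longleftrightarrow> meet A a b = a"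

definition bdd_distrib_lattice :: "('a, 'b) rb_alg_scheme \<Rightarrow> bool" where
  "bdd_distrib_lattice A \<longleftrightarrow>
     topel A \<in> carrier A \<and> botel A \<in> carrier A \<and>
     (\<forall>a\<in>carrier A. \<forall>b\<in>carrier A. meet A a b \<in> carrier A \<and> join A a b \<in> carrier A) \<and>
     (\<forall>a\<in>carrier A. \<forall>b\<in>carrier A.
        meet A a b = meet A b a \<and> join A a b = join A b a \<and>
        meet A a (join A a b) = a \<and> join A a (meet A a b) = a) \<and>
     (\<forall>a\<in>carrier A. \<forall>b\<in>carrier A. \<forall>c\<in>carrier A.
        meet A (meet A a b) c = meet A a (meet A b c) \<and>
        join A (join A a b) c = join A a (join A b c) \<and>
        meet A a (join A b c) = join A (meet A a b) (meet A a c)) \<and>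
     (\<forall>a\<in>carrier A. meet A a (topel A) = a \<and> join A a (botel A) = a)"

definition is_RBA :: "('a, 'b) rb_alg_scheme \<Rightarrow> bool" where
  "is_RBA A \<longleftrightarrow>
     bdd_distrib_lattice A \<and>
     (\<forall>a\<in>carrier A. \<forall>b\<in>carrier A.
        rarr A a b \<in> carrier A \<and> larr A a b \<in> carrier A \<and> mult A a b \<in> carrier A) \<and>
     (\<forall>a\<in>carrier A. \<forall>b\<in>carrier A. \<forall>c\<in>carrier A.
        (le A (mult A a b) c \<longleftrightarrow> le A b (rarr A a c)) \<and>
        (le A b (rarr A a c) \<longleftrightarrow> le A a (larr A c b))) \<and>
     (\<forall>a\<in>carrier A. le A (mult A a (topel A)) a \<and> le A (mult A (topel A) a) a) \<and>
     (\<forall>a\<in>carrier A. \<forall>b\<in>carrier A. le A (mult A a b) (mult A (mult A a b) b))"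

definition embeds_partial ::
  "('a, 'b) rb_alg_scheme \<Rightarrow> 'a set \<Rightarrow> ('c, 'd) rb_alg_scheme \<Rightarrow> ('a \<Rightarrow> 'c) \<Rightarrow> bool" where
  "embeds_partial A B C h \<longleftrightarrow>
     inj_on h B \<and> h ` B \<subseteq> carrier C \<and>
     (topel A \<in> B \<longrightarrow> h (topel A) = topel C) \<and>
     (botel A \<in> B \<longrightarrow> h (botel A) = botel C) \<and>
     (\<forall>a\<in>B. \<forall>b\<in>B.
        (meet A a b \<in> B \<longrightarrow> h (meet A a b) = meet C (h a) (h b)) \<and>
        (join A a b \<in> B \<longrightarrow> h (join A a b) = join C (h a) (h b)) \<and>
        (rarr A a b \<in> B \<longrightarrow> h (rarr A a b) = rarr C (h a) (h b)) \<and>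
        (larr A a b \<in> B \<longrightarrow> h (larr A a b) = larr C (h a) (h b)) \<and>
        (mult A a b \<in> B \<longrightarrow> h (mult A a b) = mult C (h a) (h b)))"

end

theory Submission
  imports Defs
begin

lemma ball_img: "(\<forall>x\<in>f ` S. P x) \<longleftrightarrow> (\<forall>a\<in>S. P (f a))" by auto

definition subl :: "('a,'b) rb_alg_scheme \<Rightarrow> 'a set \<Rightarrow> bool" where
  "subl A D \<longleftrightarrow> D \<subseteq> carrier A \<and> topel A \<in> D \<and> botel A \<in> D \<and>
     (\<forall>x\<in>D. \<forall>y\<in>D. meet A x y \<in> D \<and> join A x y \<in> D)"

context
  fixes A :: "('a,'b) rb_alg_scheme"
  assumes R: "is_RBA A"
begin

lemma L: "bdd_distrib_lattice A" using R unfolding is_RBA_def by blast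

lemma top_c[simp]: "topel A \<in> carrier A" using L unfolding bdd_distrib_lattice_def by blast
lemma bot_c[simp]: "botel A \<in> carrier A" using L unfolding bdd_distrib_lattice_def by blast
lemma meet_c[simp]: "a \<in> carrier A \<Longrightarrow> b \<in> carrier A \<Longrightarrow> meet A a b \<in> carrier A"
  using L unfolding bdd_distrib_lattice_def by blast
lemma join_c[simp]: "a \<in> carrier A \<Longrightarrow> b \<in> carrier A \<Longrightarrow> join A a b \<in> carrier A"
  using L unfolding bdd_distrib_lattice_def by blast
lemma mult_c[simp]: "a \<in> carrier A \<Longrightarrow> b \<in> carrier A \<Longrightarrow> mult A a b \<in> carrier A"
  using R unfolding is_RBA_def by blast
lemma rarr_c[simp]: "a \<in> carrier A \<Longrightarrow> b \<in> carrier A \<Longrightarrow> rarr A a b \<in> carrier A"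
  using R unfolding is_RBA_def by blast
lemma larr_c[simp]: "a \<in> carrier A \<Longrightarrow> b \<in> carrier A \<Longrightarrow> larr A a b \<in> carrier A"
  using R unfolding is_RBA_def by blast

lemma meet_comm: "a \<in> carrier A \<Longrightarrow> b \<in> carrier A \<Longrightarrow> meet A a b = meet A b a"
  using L unfolding bdd_distrib_lattice_def by blast
lemma join_comm: "a \<in> carrier A \<Longrightarrow> b \<in> carrier A \<Longrightarrow> join A a b = join A b a"
  using L unfolding bdd_distrib_lattice_def by blast
lemma abs1: "a \<in> carrier A \<Longrightarrow> b \<in> carrier A \<Longrightarrow> meet A a (join A a b) = a"
  using L unfolding bdd_distrib_lattice_def by blast
lemma abs2: "a \<in> carrier A \<Longrightarrow> b \<in> carrier A \<Longrightarrow> join A a (meet A a b) = a"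
  using L unfolding bdd_distrib_lattice_def by blast
lemma meet_assoc: "a \<in> carrier A \<Longrightarrow> b \<in> carrier A \<Longrightarrow> c \<in> carrier A \<Longrightarrow> meet A (meet A a b) c = meet A a (meet A b c)"
  using L unfolding bdd_distrib_lattice_def by blast
lemma join_assoc: "a \<in> carrier A \<Longrightarrow> b \<in> carrier A \<Longrightarrow> c \<in> carrier A \<Longrightarrow> join A (join A a b) c = join A a (join A b c)"
  using L unfolding bdd_distrib_lattice_def by blast
lemma distr: "a \<in> carrier A \<Longrightarrow> b \<in> carrier A \<Longrightarrow> c \<in> carrier A \<Longrightarrow> meet A a (join A b c) = join A (meet A a b) (meet A a c)"
  using L unfolding bdd_distrib_lattice_def by blast
lemma meet_top: "a \<in> carrier A \<Longrightarrow> meet A a (topel A) = a"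
  using L unfolding bdd_distrib_lattice_def by blast
lemma join_bot: "a \<in> carrier A \<Longrightarrow> join A a (botel A) = a"
  using L unfolding bdd_distrib_lattice_def by blast

lemma meet_idem: "a \<in> carrier A \<Longrightarrow> meet A a a = a"
  by (metis abs1 abs2 meet_c)
lemma join_idem: "a \<in> carrier A \<Longrightarrow> join A a a = a"
  by (metis abs1 abs2 join_c)
lemma meet_lc: "a \<in> carrier A \<Longrightarrow> b \<in> carrier A \<Longrightarrow> c \<in> carrier A \<Longrightarrow> meet A a (meet A b c) = meet A b (meet A a c)"
  by (metis meet_assoc meet_comm)
lemma join_lc: "a \<in> carrier A \<Longrightarrow> b \<in> carrier A \<Longrightarrow> c \<in> carrier A \<Longrightarrow> join A a (join A b c) = join A b (join A a c)"
  by (metis join_assoc join_comm)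
lemma distr2: "a \<in> carrier A \<Longrightarrow> b \<in> carrier A \<Longrightarrow> c \<in> carrier A \<Longrightarrow> meet A (join A b c) a = join A (meet A b a) (meet A c a)"
  by (metis distr meet_comm join_c)

lemma le_refl: "a \<in> carrier A \<Longrightarrow> le A a a" by (simp add: le_def meet_idem)
lemma le_trans: "a \<in> carrier A \<Longrightarrow> b \<in> carrier A \<Longrightarrow> c \<in> carrier A \<Longrightarrow> le A a b \<Longrightarrow> le A b c \<Longrightarrow> le A a c"
  unfolding le_def by (metis meet_assoc)
lemma le_antisym: "a \<in> carrier A \<Longrightarrow> b \<in> carrier A \<Longrightarrow> le A a b \<Longrightarrow> le A b a \<Longrightarrow> a = b"
  unfolding le_def by (metis meet_comm)
lemma le_join: "a \<in> carrier A \<Longrightarrow> b \<in> carrier A \<Longrightarrow> le A a b \<longleftrightarrow> join A a b = b"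
  unfolding le_def by (metis abs1 abs2 meet_comm join_comm)
lemma meet_lb1: "a \<in> carrier A \<Longrightarrow> b \<in> carrier A \<Longrightarrow> le A (meet A a b) a"
  unfolding le_def by (metis meet_assoc meet_comm meet_idem)
lemma meet_lb2: "a \<in> carrier A \<Longrightarrow> b \<in> carrier A \<Longrightarrow> le A (meet A a b) b"
  by (metis meet_lb1 meet_comm)
lemma meet_glb: "a \<in> carrier A \<Longrightarrow> b \<in> carrier A \<Longrightarrow> c \<in> carrier A \<Longrightarrow> le A c a \<Longrightarrow> le A c b \<Longrightarrow> le A c (meet A a b)"
  unfolding le_def by (metis meet_assoc)
lemma join_ub1: "a \<in> carrier A \<Longrightarrow> b \<in> carrier A \<Longrightarrow> le A a (join A a b)"
  unfolding le_def by (metis abs1)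
lemma join_ub2: "a \<in> carrier A \<Longrightarrow> b \<in> carrier A \<Longrightarrow> le A b (join A a b)"
  by (metis join_ub1 join_comm)
lemma join_lub: "a \<in> carrier A \<Longrightarrow> b \<in> carrier A \<Longrightarrow> c \<in> carrier A \<Longrightarrow> le A a c \<Longrightarrow> le A b c \<Longrightarrow> le A (join A a b) c"
  by (metis le_join join_assoc join_c)
lemma top_gr: "a \<in> carrier A \<Longrightarrow> le A a (topel A)" by (simp add: le_def meet_top)
lemma bot_le: "a \<in> carrier A \<Longrightarrow> le A (botel A) a" by (metis le_join join_bot join_comm bot_c)

lemma join_step:
  assumes c: "l1 \<in> carrier A" "l2 \<in> carrier A" "l3 \<in> carrier A" "l4 \<in> carrier A" "b \<in> carrier A"
  shows "join A (join A (meet A l1 b) l2) (join A (meet A l3 b) l4) = join A (meet A (join A l1 l3) b) (join A l2 l4)"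
  using c by (simp add: distr2 join_assoc join_lc)

lemma meet_step:
  assumes c: "l1 \<in> carrier A" "l2 \<in> carrier A" "l3 \<in> carrier A" "l4 \<in> carrier A" "b \<in> carrier A"
  shows "meet A (join A (meet A l1 b) l2) (join A (meet A l3 b) l4) =
    join A (meet A (join A (join A (meet A l1 l3) (meet A l2 l3)) (meet A l1 l4)) b) (meet A l2 l4)"
proof -
  let ?p = "meet A l1 b" and ?q = "meet A l3 b"
  have "meet A (join A ?p l2) (join A ?q l4) = join A (meet A (join A ?p l2) ?q) (meet A (join A ?p l2) l4)"
    using c by (simp add: distr)
  also have "\<dots> = join A (join A (meet A ?p ?q) (meet A l2 ?q)) (join A (meet A ?p l4) (meet A l2 l4))"
    using c by (simp add: distr2)
  also have "meet A ?p ?q = meet A (meet A l1 l3) b" using c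
    by (simp add: meet_assoc meet_lc meet_idem)
  also have "meet A l2 ?q = meet A (meet A l2 l3) b" using c by (simp add: meet_assoc)
  also have "meet A ?p l4 = meet A (meet A l1 l4) b" using c by (simp add: meet_assoc meet_comm meet_lc)
  finally show ?thesis using c by (simp add: distr2 join_assoc join_lc)
qed

lemma sublattice_exists:
  "finite X \<Longrightarrow> X \<subseteq> carrier A \<Longrightarrow> \<exists>D. finite D \<and> X \<subseteq> D \<and> subl A D"
proof (induction X rule: finite_induct)
  case empty
  have t: "topel A \<in> carrier A" and b: "botel A \<in> carrier A" by simp_all
  have a1: "join A (botel A) (topel A) = topel A"
    by (rule trans[OF join_comm[OF b t] join_bot[OF t]])
  have a2: "join A (topel A) (botel A) = topel A" using join_bot[OF t] .
  have a3: "meet A (botel A) (topel A) = botel A" using meet_top[OF b] .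
  have a4: "meet A (topel A) (botel A) = botel A"
    by (rule trans[OF meet_comm[OF t b] meet_top[OF b]])
  have i: "meet A (topel A) (topel A) = topel A" "meet A (botel A) (botel A) = botel A"
     "join A (topel A) (topel A) = topel A" "join A (botel A) (botel A) = botel A"
    by (rule meet_idem[OF t] meet_idem[OF b] join_idem[OF t] join_idem[OF b])+
  have "subl A {topel A, botel A}"
    unfolding subl_def
  proof (intro conjI ballI)
    fix x y assume "x \<in> {topel A, botel A}" "y \<in> {topel A, botel A}"
    then show "meet A x y \<in> {topel A, botel A}" "join A x y \<in> {topel A, botel A}"
      by (auto simp only: a1 a2 a3 a4 i insert_iff empty_iff simp_thms)
  qed (use t b in auto)
  then show ?case by (intro exI[of _ "{topel A, botel A}"]) simp
next
  case (insert b X)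
  have "X \<subseteq> carrier A" using insert.prems by simp
  then obtain D where D: "finite D" "X \<subseteq> D" "subl A D" using insert.IH by blast
  have Dc: "D \<subseteq> carrier A" using D(3) unfolding subl_def by blast
  have bc: "b \<in> carrier A" using insert by auto
  have cl: "\<And>x y. x \<in> D \<Longrightarrow> y \<in> D \<Longrightarrow> meet A x y \<in> D \<and> join A x y \<in> D"
    using D(3) unfolding subl_def by blast
  have tb: "topel A \<in> D" "botel A \<in> D" using D(3) unfolding subl_def by blast+
  define D' where "D' = (\<lambda>(l1,l2). join A (meet A l1 b) l2) ` (D \<times> D)"
  have inD': "join A (meet A l1 b) l2 \<in> D'" if "l1 \<in> D" "l2 \<in> D" for l1 l2
    using that unfolding D'_def by force
  have D'c: "D' \<subseteq> carrier A" unfolding D'_def using Dc bc by (auto intro!: join_c meet_c)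
  have sub: "D \<subseteq> D'"
  proof
    fix x assume "x \<in> D"
    then have xc: "x \<in> carrier A" using Dc by auto
    have "meet A (botel A) b = botel A" using bot_le[OF bc] unfolding le_def .
    moreover have "join A (botel A) x = x"
      using trans[OF join_comm[OF bot_c xc] join_bot[OF xc]] .
    ultimately have "join A (meet A (botel A) b) x = x" by simp
    then show "x \<in> D'" using inD'[OF tb(2) \<open>x \<in> D\<close>] by simp
  qed
  have bD': "b \<in> D'"
  proof -
    have "meet A (topel A) b = b" using trans[OF meet_comm[OF top_c bc] meet_top[OF bc]] .
    then have "join A (meet A (topel A) b) (botel A) = b" using join_bot[OF bc] by simp
    then show ?thesis using inD'[OF tb(1) tb(2)] by simp
  qed
  have cl': "meet A x y \<in> D' \<and> join A x y \<in> D'" if "x \<in> D'" "y \<in> D'" for x y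
  proof -
    obtain l1 l2 where x: "l1 \<in> D" "l2 \<in> D" "x = join A (meet A l1 b) l2" using \<open>x \<in> D'\<close> unfolding D'_def by auto
    obtain l3 l4 where y: "l3 \<in> D" "l4 \<in> D" "y = join A (meet A l3 b) l4" using \<open>y \<in> D'\<close> unfolding D'_def by auto
    have c: "l1 \<in> carrier A" "l2 \<in> carrier A" "l3 \<in> carrier A" "l4 \<in> carrier A" using x y Dc by auto
    show ?thesis
      unfolding x(3) y(3) meet_step[OF c bc] join_step[OF c bc]
      using cl x y by (intro conjI inD') (meson cl)+
  qed
  have fin: "finite D'" unfolding D'_def using D(1) by simp
  have ins: "insert b X \<subseteq> D'" using bD' D(2) sub by blast
  have sD': "subl A D'" unfolding subl_def using D'c tb sub cl' by blast
  show ?case using fin ins sD' by blast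
qed



lemma glb_ex:
  assumes D: "subl A D"
  shows "finite S \<Longrightarrow> S \<noteq> {} \<Longrightarrow> S \<subseteq> D \<Longrightarrow>
    \<exists>m\<in>D. (\<forall>s\<in>S. le A m s) \<and> (\<forall>y\<in>carrier A. (\<forall>s\<in>S. le A y s) \<longrightarrow> le A y m)"
proof (induction S rule: finite_ne_induct)
  case (singleton x)
  have "x \<in> carrier A" using singleton D unfolding subl_def by blast
  then show ?case using singleton le_refl by auto
next
  case (insert x F)
  then obtain m where m: "m \<in> D" "\<forall>s\<in>F. le A m s" "\<forall>y\<in>carrier A. (\<forall>s\<in>F. le A y s) \<longrightarrow> le A y m" by auto
  have Dc: "D \<subseteq> carrier A" and cl: "\<And>a b. a \<in> D \<Longrightarrow> b \<in> D \<Longrightarrow> meet A a b \<in> D" using D unfolding subl_def by blast+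
  have x: "x \<in> D" using insert by auto
  have xc: "x \<in> carrier A" and mc: "m \<in> carrier A" using x m Dc by auto
  show ?case
  proof (intro bexI[of _ "meet A x m"] conjI ballI impI)
    show "meet A x m \<in> D" using cl x m by auto
    fix s assume "s \<in> insert x F"
    then show "le A (meet A x m) s"
    proof
      assume "s = x" then show ?thesis using meet_lb1 xc mc by auto
    next
      assume "s \<in> F"
      then have "le A m s" "s \<in> carrier A" using m insert Dc by auto
      then show ?thesis using le_trans[OF _ mc] meet_lb2 xc mc by auto
    qed
  next
    fix y assume "y \<in> carrier A" "\<forall>s\<in>insert x F. le A y s"
    then show "le A y (meet A x m)" using meet_glb xc mc m by auto
  qed
qed

lemma lub_ex:
  assumes D: "subl A D"
  shows "finite S \<Longrightarrow> S \<noteq> {} \<Longrightarrow> S \<subseteq> D \<Longrightarrow>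
    \<exists>m\<in>D. (\<forall>s\<in>S. le A s m) \<and> (\<forall>y\<in>carrier A. (\<forall>s\<in>S. le A s y) \<longrightarrow> le A m y)"
proof (induction S rule: finite_ne_induct)
  case (singleton x)
  have "x \<in> carrier A" using singleton D unfolding subl_def by blast
  then show ?case using singleton le_refl by auto
next
  case (insert x F)
  then obtain m where m: "m \<in> D" "\<forall>s\<in>F. le A s m" "\<forall>y\<in>carrier A. (\<forall>s\<in>F. le A s y) \<longrightarrow> le A m y" by auto
  have Dc: "D \<subseteq> carrier A" and cl: "\<And>a b. a \<in> D \<Longrightarrow> b \<in> D \<Longrightarrow> join A a b \<in> D" using D unfolding subl_def by blast+
  have x: "x \<in> D" using insert by auto
  have xc: "x \<in> carrier A" and mc: "m \<in> carrier A" using x m Dc by auto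
  show ?case
  proof (intro bexI[of _ "join A x m"] conjI ballI impI)
    show "join A x m \<in> D" using cl x m by auto
    fix s assume "s \<in> insert x F"
    then show "le A s (join A x m)"
    proof
      assume "s = x" then show ?thesis using join_ub1 xc mc by auto
    next
      assume "s \<in> F"
      then have "le A s m" "s \<in> carrier A" using m insert Dc by auto
      then show ?thesis using le_trans[OF _ mc] join_ub2 xc mc by auto
    qed
  next
    fix y assume "y \<in> carrier A" "\<forall>s\<in>insert x F. le A s y"
    then show "le A (join A x m) y" using join_lub xc mc m by auto
  qed
qed

definition up :: "'a set \<Rightarrow> 'a \<Rightarrow> 'a" where
  "up D x = (SOME m. m \<in> D \<and> (\<forall>d\<in>D. le A m d \<longleftrightarrow> le A x d))"
definition dn :: "'a set \<Rightarrow> 'a \<Rightarrow> 'a" where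
  "dn D x = (SOME m. m \<in> D \<and> (\<forall>d\<in>D. le A d m \<longleftrightarrow> le A d x))"

lemma up_prop:
  assumes D: "subl A D" "finite D" and x: "x \<in> carrier A"
  shows "up D x \<in> D \<and> (\<forall>d\<in>D. le A (up D x) d \<longleftrightarrow> le A x d)"
proof -
  let ?U = "{d\<in>D. le A x d}"
  have Dc: "D \<subseteq> carrier A" and t: "topel A \<in> D" using D unfolding subl_def by blast+
  have "?U \<noteq> {}" using t top_gr x by auto
  then obtain m where m: "m \<in> D" "\<forall>s\<in>?U. le A m s" "\<forall>y\<in>carrier A. (\<forall>s\<in>?U. le A y s) \<longrightarrow> le A y m"
    using glb_ex[OF D(1), of ?U] D(2) by auto
  have xm: "le A x m" using m(3) x by auto
  have "m \<in> D \<and> (\<forall>d\<in>D. le A m d \<longleftrightarrow> le A x d)"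
    using m xm le_trans[OF x, of m] Dc by auto
  then show ?thesis unfolding up_def by (rule someI)
qed

lemma dn_prop:
  assumes D: "subl A D" "finite D" and x: "x \<in> carrier A"
  shows "dn D x \<in> D \<and> (\<forall>d\<in>D. le A d (dn D x) \<longleftrightarrow> le A d x)"
proof -
  let ?U = "{d\<in>D. le A d x}"
  have Dc: "D \<subseteq> carrier A" and t: "botel A \<in> D" using D unfolding subl_def by blast+
  have "?U \<noteq> {}" using t bot_le x by auto
  then obtain m where m: "m \<in> D" "\<forall>s\<in>?U. le A s m" "\<forall>y\<in>carrier A. (\<forall>s\<in>?U. le A s y) \<longrightarrow> le A m y"
    using lub_ex[OF D(1), of ?U] D(2) by auto
  have xm: "le A m x" using m(3) x by auto
  have "m \<in> D \<and> (\<forall>d\<in>D. le A d m \<longleftrightarrow> le A d x)"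
  proof (intro conjI ballI iffI)
    fix d assume "d \<in> D" "le A d m" then show "le A d x" using le_trans[OF _ _ x, of d m] xm m Dc by auto
  qed (use m in auto)
  then show ?thesis unfolding dn_def by (rule someI)
qed

lemma resid1: "a \<in> carrier A \<Longrightarrow> b \<in> carrier A \<Longrightarrow> c \<in> carrier A \<Longrightarrow> le A (mult A a b) c \<longleftrightarrow> le A b (rarr A a c)"
  using R unfolding is_RBA_def by blast
lemma resid2: "a \<in> carrier A \<Longrightarrow> b \<in> carrier A \<Longrightarrow> c \<in> carrier A \<Longrightarrow> le A b (rarr A a c) \<longleftrightarrow> le A a (larr A c b)"
  using R unfolding is_RBA_def by blast
lemma ax_top: "a \<in> carrier A \<Longrightarrow> le A (mult A a (topel A)) a \<and> le A (mult A (topel A) a) a"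
  using R unfolding is_RBA_def by blast
lemma ax_sq: "a \<in> carrier A \<Longrightarrow> b \<in> carrier A \<Longrightarrow> le A (mult A a b) (mult A (mult A a b) b)"
  using R unfolding is_RBA_def by blast

lemma mult_mono1: "x \<in> carrier A \<Longrightarrow> y \<in> carrier A \<Longrightarrow> b \<in> carrier A \<Longrightarrow> le A x y \<Longrightarrow> le A (mult A x b) (mult A y b)"
proof -
  assume c: "x \<in> carrier A" "y \<in> carrier A" "b \<in> carrier A" and xy: "le A x y"
  have "le A y (larr A (mult A y b) b)"
    using resid1[of y b "mult A y b"] resid2[of y b "mult A y b"] c le_refl by simp
  then have "le A x (larr A (mult A y b) b)" using le_trans[OF c(1) c(2)] xy c by simp
  then show ?thesis using resid1[of x b "mult A y b"] resid2[of x b "mult A y b"] c by simp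
qed

definition Fin :: "'a set \<Rightarrow> 'a rb_alg" where
  "Fin D = \<lparr>carrier = D, meet = meet A, join = join A, topel = topel A, botel = botel A,
     rarr = \<lambda>a c. dn D (rarr A a c), larr = \<lambda>c b. dn D (larr A c b), mult = \<lambda>a b. up D (mult A a b)\<rparr>"

lemma Fin_simps: "carrier (Fin D) = D" "meet (Fin D) = meet A" "join (Fin D) = join A"
  "topel (Fin D) = topel A" "botel (Fin D) = botel A" "rarr (Fin D) = (\<lambda>a c. dn D (rarr A a c))"
  "larr (Fin D) = (\<lambda>c b. dn D (larr A c b))" "mult (Fin D) = (\<lambda>a b. up D (mult A a b))"
  by (simp_all add: Fin_def)

lemma le_Fin[simp]: "le (Fin D) = le A" by (simp add: Fin_def le_def[abs_def])

lemma Fin_RBA: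
  assumes D: "subl A D" "finite D"
  shows "is_RBA (Fin D)"
proof -
  have Dc: "D \<subseteq> carrier A" and tb: "topel A \<in> D" "botel A \<in> D"
    and cl: "\<And>a b. a \<in> D \<Longrightarrow> b \<in> D \<Longrightarrow> meet A a b \<in> D \<and> join A a b \<in> D"
    using D unfolding subl_def by blast+
  have c: "\<And>x. x \<in> D \<Longrightarrow> x \<in> carrier A" using Dc by blast
  note upp = up_prop[OF D] and dnp = dn_prop[OF D]
  have lat: "bdd_distrib_lattice (Fin D)"
    unfolding bdd_distrib_lattice_def Fin_simps
  proof (intro conjI ballI)
    fix a b assume "a \<in> D" "b \<in> D"
    then have "a \<in> carrier A" "b \<in> carrier A" using c by auto
    then show "meet A a b = meet A b a" "join A a b = join A b a"
      "meet A a (join A a b) = a" "join A a (meet A a b) = a"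
      by (rule meet_comm join_comm abs1 abs2)+
  next
    fix a b cc assume "a \<in> D" "b \<in> D" "cc \<in> D"
    then have "a \<in> carrier A" "b \<in> carrier A" "cc \<in> carrier A" using c by auto
    then show "meet A (meet A a b) cc = meet A a (meet A b cc)"
      "join A (join A a b) cc = join A a (join A b cc)"
      "meet A a (join A b cc) = join A (meet A a b) (meet A a cc)"
      by (rule meet_assoc join_assoc distr)+
  next
    fix a assume "a \<in> D"
    then have "a \<in> carrier A" using c by auto
    then show "meet A a (topel A) = a" "join A a (botel A) = a" by (rule meet_top join_bot)+
  qed (use tb cl in auto)
  have ops: "\<forall>a\<in>D. \<forall>b\<in>D. dn D (rarr A a b) \<in> D \<and> dn D (larr A a b) \<in> D \<and> up D (mult A a b) \<in> D"
    using upp dnp c by simp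
  have res: "(le A (up D (mult A a b)) cc \<longleftrightarrow> le A b (dn D (rarr A a cc))) \<and>
        (le A b (dn D (rarr A a cc)) \<longleftrightarrow> le A a (dn D (larr A cc b)))"
    if "a \<in> D" "b \<in> D" "cc \<in> D" for a b cc
  proof -
    have "le A (up D (mult A a b)) cc \<longleftrightarrow> le A (mult A a b) cc" using upp[of "mult A a b"] c that by simp
    moreover have "le A b (dn D (rarr A a cc)) \<longleftrightarrow> le A b (rarr A a cc)" using dnp[of "rarr A a cc"] c that by simp
    moreover have "le A a (dn D (larr A cc b)) \<longleftrightarrow> le A a (larr A cc b)" using dnp[of "larr A cc b"] c that by simp
    ultimately show ?thesis using resid1 resid2 c that by simp
  qed
  have tp: "le A (up D (mult A a (topel A))) a \<and> le A (up D (mult A (topel A) a)) a" if "a \<in> D" for a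
    using upp[of "mult A a (topel A)"] upp[of "mult A (topel A) a"] ax_top[of a] c that by simp
  have sq: "le A (up D (mult A a b)) (up D (mult A (up D (mult A a b)) b))" if "a \<in> D" "b \<in> D" for a b
  proof -
    let ?u = "up D (mult A a b)"
    have ac: "a \<in> carrier A" "b \<in> carrier A" using that c by auto
    have u: "?u \<in> D" "le A (mult A a b) ?u" using upp[of "mult A a b"] ac le_refl c by auto
    have uc: "?u \<in> carrier A" using u c by auto
    have v: "up D (mult A ?u b) \<in> D" "le A (mult A ?u b) (up D (mult A ?u b))"
      using upp[of "mult A ?u b"] ac uc le_refl c by auto
    have s1: "le A (mult A a b) (mult A (mult A a b) b)" using ax_sq ac by simp
    have s2: "le A (mult A (mult A a b) b) (mult A ?u b)" using mult_mono1 u uc ac by simp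
    have s3: "le A (mult A a b) (mult A ?u b)" using le_trans[OF _ _ _ s1 s2] ac uc by simp
    have "le A (mult A a b) (up D (mult A ?u b))" using le_trans[OF _ _ _ s3 v(2)] ac uc c v(1) by simp
    then show ?thesis using upp[of "mult A a b"] v ac c by simp
  qed
  show ?thesis unfolding is_RBA_def le_Fin Fin_simps
  proof (intro conjI ballI)
    show "bdd_distrib_lattice (Fin D)" by (rule lat)
  next
    fix a b assume "a \<in> D" "b \<in> D" then show "dn D (rarr A a b) \<in> D" using ops by blast
  next
    fix a b assume "a \<in> D" "b \<in> D" then show "dn D (larr A a b) \<in> D" using ops by blast
  next
    fix a b assume "a \<in> D" "b \<in> D" then show "up D (mult A a b) \<in> D" using ops by blast
  next
    fix a b cc assume "a \<in> D" "b \<in> D" "cc \<in> D"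
    then show "le A (up D (mult A a b)) cc \<longleftrightarrow> le A b (dn D (rarr A a cc))" using res[of a b cc] by simp
  next
    fix a b cc assume "a \<in> D" "b \<in> D" "cc \<in> D"
    then show "le A b (dn D (rarr A a cc)) \<longleftrightarrow> le A a (dn D (larr A cc b))" using res[of a b cc] by simp
  next
    fix a assume "a \<in> D" then show "le A (up D (mult A a (topel A))) a" using tp by simp
  next
    fix a assume "a \<in> D" then show "le A (up D (mult A (topel A) a)) a" using tp by simp
  next
    fix a b assume "a \<in> D" "b \<in> D" then show "le A (up D (mult A a b)) (up D (mult A (up D (mult A a b)) b))" by (rule sq)
  qed
qed


lemma up_id: assumes D: "subl A D" "finite D" and x: "x \<in> D" shows "up D x = x"
proof -
  have xc: "x \<in> carrier A" using D x unfolding subl_def by blast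
  have u: "up D x \<in> D" "\<forall>d\<in>D. le A (up D x) d \<longleftrightarrow> le A x d" using up_prop[OF D xc] by auto
  have uc: "up D x \<in> carrier A" using D u unfolding subl_def by blast
  have "le A (up D x) x" using u x le_refl[OF xc] by blast
  moreover have "le A x (up D x)" using u le_refl[OF uc] by blast
  ultimately show ?thesis using le_antisym[OF uc xc] by blast
qed

lemma dn_id: assumes D: "subl A D" "finite D" and x: "x \<in> D" shows "dn D x = x"
proof -
  have xc: "x \<in> carrier A" using D x unfolding subl_def by blast
  have u: "dn D x \<in> D" "\<forall>d\<in>D. le A d (dn D x) \<longleftrightarrow> le A d x" using dn_prop[OF D xc] by auto
  have uc: "dn D x \<in> carrier A" using D u unfolding subl_def by blast
  have "le A x (dn D x)" using u x le_refl[OF xc] by blast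
  moreover have "le A (dn D x) x" using u le_refl[OF uc] by blast
  ultimately show ?thesis using le_antisym[OF uc xc] by blast
qed

end

definition tr :: "('c \<Rightarrow> nat) \<Rightarrow> 'c rb_alg \<Rightarrow> nat rb_alg" where
  "tr f C = \<lparr>carrier = f ` carrier C,
     meet = \<lambda>x y. f (meet C (inv_into (carrier C) f x) (inv_into (carrier C) f y)),
     join = \<lambda>x y. f (join C (inv_into (carrier C) f x) (inv_into (carrier C) f y)),
     topel = f (topel C), botel = f (botel C),
     rarr = \<lambda>x y. f (rarr C (inv_into (carrier C) f x) (inv_into (carrier C) f y)),
     larr = \<lambda>x y. f (larr C (inv_into (carrier C) f x) (inv_into (carrier C) f y)),
     mult = \<lambda>x y. f (mult C (inv_into (carrier C) f x) (inv_into (carrier C) f y))\<rparr>"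

lemma tr_simps:
  assumes "inj_on f (carrier C)" "a \<in> carrier C" "b \<in> carrier C"
  shows "meet (tr f C) (f a) (f b) = f (meet C a b)"
    "join (tr f C) (f a) (f b) = f (join C a b)"
    "rarr (tr f C) (f a) (f b) = f (rarr C a b)"
    "larr (tr f C) (f a) (f b) = f (larr C a b)"
    "mult (tr f C) (f a) (f b) = f (mult C a b)"
  using assms by (simp_all add: tr_def)

lemma tr_simps2: "carrier (tr f C) = f ` carrier C" "topel (tr f C) = f (topel C)" "botel (tr f C) = f (botel C)"
  by (simp_all add: tr_def)

lemma tr_RBA:
  assumes R: "is_RBA C" and inj: "inj_on f (carrier C)"
  shows "is_RBA (tr f C)"
proof -
  have tc: "topel C \<in> carrier C" "botel C \<in> carrier C" using top_c[OF R] bot_c[OF R] .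
  have cl: "\<And>a b. a \<in> carrier C \<Longrightarrow> b \<in> carrier C \<Longrightarrow>
     meet C a b \<in> carrier C \<and> join C a b \<in> carrier C \<and> rarr C a b \<in> carrier C \<and>
     larr C a b \<in> carrier C \<and> mult C a b \<in> carrier C"
    by (simp add: meet_c[OF R] join_c[OF R] rarr_c[OF R] larr_c[OF R] mult_c[OF R])
  have eq: "\<And>x y. x \<in> carrier C \<Longrightarrow> y \<in> carrier C \<Longrightarrow> f x = f y \<longleftrightarrow> x = y"
    using inj_on_eq_iff[OF inj] by blast
  have le_tr: "le (tr f C) (f a) (f b) \<longleftrightarrow> le C a b" if "a \<in> carrier C" "b \<in> carrier C" for a b
    unfolding le_def using that tr_simps[OF inj that] eq cl by simp
  have "is_RBA (tr f C) \<longleftrightarrow> is_RBA C"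
    unfolding is_RBA_def bdd_distrib_lattice_def tr_simps2 ball_img
    by (simp add: tr_simps[OF inj] le_tr eq cl tc)
  then show ?thesis using R by simp
qed

theorem mainTheorem5:
  fixes A :: "'a rb_alg" and B :: "'a set"
  assumes "is_RBA A" and "finite B" and "B \<subseteq> carrier A"
  shows "\<exists>(C :: nat rb_alg) h. is_RBA C \<and> finite (carrier C) \<and> embeds_partial A B C h"
proof -
  obtain D where D: "finite D" "B \<subseteq> D" "subl A D"
    using sublattice_exists[OF assms(1) assms(2) assms(3)] by blast
  have F: "is_RBA (Fin A D)" using Fin_RBA[OF assms(1) D(3) D(1)] .
  obtain f :: "'a \<Rightarrow> nat" and n where fn: "f ` D = {i. i < n}" "inj_on f D"
    using finite_imp_inj_to_nat_seg[OF D(1)] by blast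
  have cF: "carrier (Fin A D) = D" by (simp add: Fin_simps[OF assms(1)])
  have inj: "inj_on f (carrier (Fin A D))" using fn cF by simp
  let ?C = "tr f (Fin A D)"
  have RC: "is_RBA ?C" using tr_RBA[OF F inj] .
  have fin: "finite (carrier ?C)" using D(1) by (simp add: tr_simps2 cF)
  have Dc: "D \<subseteq> carrier A" using D(3) unfolding subl_def by blast
  have emb: "embeds_partial A B ?C f"
    unfolding embeds_partial_def
  proof (intro conjI ballI impI)
    show "inj_on f B" using fn(2) D(2) inj_on_subset by blast
    show "f ` B \<subseteq> carrier ?C" using D(2) by (auto simp: tr_simps2 cF)
    show "f (topel A) = topel ?C" by (simp add: tr_simps2 Fin_simps[OF assms(1)])
    show "f (botel A) = botel ?C" by (simp add: tr_simps2 Fin_simps[OF assms(1)])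
  next
    fix a b assume ab: "a \<in> B" "b \<in> B"
    then have abD: "a \<in> carrier (Fin A D)" "b \<in> carrier (Fin A D)" using D(2) cF by auto
    note ts = tr_simps[OF inj abD]
    {
      assume "meet A a b \<in> B"
      then show "f (meet A a b) = meet ?C (f a) (f b)" using ts by (simp add: Fin_simps[OF assms(1)])
    next
      assume "join A a b \<in> B"
      then show "f (join A a b) = join ?C (f a) (f b)" using ts by (simp add: Fin_simps[OF assms(1)])
    next
      assume "rarr A a b \<in> B"
      then show "f (rarr A a b) = rarr ?C (f a) (f b)" using ts dn_id[OF assms(1) D(3) D(1)] D(2)
        by (auto simp: Fin_simps[OF assms(1)])
    next
      assume "larr A a b \<in> B"
      then show "f (larr A a b) = larr ?C (f a) (f b)" using ts dn_id[OF assms(1) D(3) D(1)] D(2)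
        by (auto simp: Fin_simps[OF assms(1)])
    next
      assume "mult A a b \<in> B"
      then show "f (mult A a b) = mult ?C (f a) (f b)" using ts up_id[OF assms(1) D(3) D(1)] D(2)
        by (auto simp: Fin_simps[OF assms(1)])
    }
  qed
  show ?thesis using RC fin emb by blast
qed

end
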